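(* Consider the iterative algorithm (described in the context) for the incomplete multi-view learning problem. The sequences $\{\mathcal{G}^k\}$ and $\{\mathcal{Y}^k\}$ it generates satisfy $\lim_{k\to\infty}\|\mathcal{G}^k-\mathcal{Y}^k\|_F=0$, $\lim_{k\to\infty}\|\mathcal{G}^{k+1}-\mathcal{G}^k\|_F=0$, and $\lim_{k\to\infty}\|\mathcal{Y}^{k+1}-\mathcal{Y}^k\|_F=0$.
   Context: Data: $m$ views $X_i\in\mathbb{R}^{d_i\times n}$, $i=1,\dots,m$, of $n$ samples; if the $j$-th instance of view $i$ is missing then the column $X_{i(:,j)}=0$. $P_i\in\mathbb{R}^{n\times n}$ is diagonal with $P_{i(j,j)}=1$ if the $j$-th instance of view $i$ is present and $0$ otherwise; $n_i$ is the number of present instances of view $i$. Assume $X_iP_iX_i^\top$ is invertible for each $i$. $\mathcal{M}\in\mathbb{R}^{n\times m\times n}$ is a given (incomplete) graph tensor, and $\Omega$ is the set of indices $(i,j,k)$ where $\mathcal{M}$ is observed; $P_\Omega(\mathcal{Z})$ keeps entries with indices in $\Omega$ and sets the others to $0$. For a graph tensor $\mathcal{G}\in\mathbb{R}^{n\times m\times n}$ write $G_i=\mathcal{G}_{(:,i,:)}\in\mathbb{R}^{n\times n}$. For $A\in\mathbb{R}^{d\times n}$ and $G\in\mathbb{R}^{n\times n}$, $\mathrm{tr}(AL_GA^\top)=\tfrac12\sum_{j,k}G_{(j,k)}\|A_{(:,j)}-A_{(:,k)}\|_2^2$. Parameters: $\lambda,\mu,\gamma>0$, $0<p\le1$, weights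 $w_1\ge\cdots\ge w_l\ge0$ with $l=\min(n,m)$, a semi-orthogonal $\Phi\in\mathbb{R}^{n\times r}$ ($\Phi^\top\Phi=I_r$) and $\Phi^c\in\mathbb{R}^{n\times(n-r)}$ with $\overline{\Phi}=[\Phi,\Phi^c]$ orthogonal. Tensor norm: for $\mathcal{X}\in\mathbb{R}^{n_1\times n_2\times n_3}$ with frontal slices $X^{(k)}$ and $\Psi\in\mathbb{R}^{n_3\times s}$, $\mathcal{X}_\Psi$ has frontal slices $X_\Psi^{(i)}=\sum_k\Psi_{ki}X^{(k)}$; $\|\mathcal{X}\|_{\Phi,w,S_p}^p=\sum_{i=1}^r\sum_{j=1}^l w_j\sigma_j(X_\Phi^{(i)})^p$, $\sigma_j$ the $j$-th smallest singular value. For a matrix $Y=U\Sigma V^\top$ (SVD), $S_{\tau,w,p}(Y)=U\mathrm{diag}(\gamma_j)V^\top$ with $\gamma_j$ (replacing $\sigma_j(Y)$) a global minimizer of $\min_{x\ge0}\frac12(x-\sigma_j(Y))^2+\tau w_jx^p$. With $f_i(A,W_i,G_i)=\|(A-W_i^\top X_i)P_i\|_F^2+\lambda\,\mathrm{tr}(AL_{G_i}A^\top)$, the algorithm is: initialize $k=0$, $\eta=1.1$, $\rho^0=10^{-4}$, $\delta_i^0=1/m$, $\mathcal{C}^0=0$, $\mathcal{G}^0=\mathcal{Y}^0=\mathcal{M}$. At iteration $k$: (1) $(A^{k+1},\{W_i^{k+1}\})$ minimizes $\sum_i\delta_i^k f_i(A,W_i,G_i^k)$ subject to $AA^\top=I_d$,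 with $W_i^{k+1}=(X_iP_iX_i^\top)^{-1}X_iP_i(A^{k+1})^\top$; (2) $\delta_i^{k+1}=n_i/\sqrt{f_i(A^{k+1},W_i^{k+1},G_i^k)}$; (3) $\mathcal{G}^{k+1}$ is the minimizer of $\lambda\sum_i\delta_i^{k+1}\mathrm{tr}(A^{k+1}L_{G_i}(A^{k+1})^\top)+\frac\gamma2\|P_\Omega(\mathcal{G})-P_\Omega(\mathcal{M})\|_F^2+\frac{\rho^k}2\|\mathcal{G}-\mathcal{Y}^k+\mathcal{C}^k/\rho^k\|_F^2$ subject to $G_i\ge0$ entrywise and $G_i\mathbf{1}=\mathbf{1}$ for all $i$; (4) with $\mathcal{B}^k=\mathcal{G}^{k+1}+\mathcal{C}^k/\rho^k$, $\mathcal{Y}^{k+1}=(\mathcal{Z})_{\overline{\Phi}^\top}$ where $\mathcal{Z}$ has frontal slices $S_{\mu/\rho^k,w,p}(B_\Phi^{k\,(i)})$ for $i\le r$ and $B_{\Phi^c}^{k\,(j)}$ for the remaining $n-r$ slices (a minimizer of $\frac{\mu}{\rho^k}\|\mathcal{Y}\|_{\Phi,w,S_p}^p+\frac12\|\mathcal{B}^k-\mathcal{Y}\|_F^2$); (5) $\mathcal{C}^{k+1}=\mathcal{C}^k+\rho^k(\mathcal{G}^{k+1}-\mathcal{Y}^{k+1})$; (6) $\rho^{k+1}=\eta\rho^k$. *)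

theory Defs
  imports Complex_Main "Jordan_Normal_Form.Gauss_Jordan_Elimination"
begin

(* Third-order tensors in R^{n1 x n2 x n3} are represented as functions
   nat => nat => nat => real; only entries with indices < n1, n2, n3 matter.
   All indices are 0-based (paper index j corresponds to j-1 here). *)
type_synonym tensor = "nat \<Rightarrow> nat \<Rightarrow> nat \<Rightarrow> real"

definition tfro :: "nat \<Rightarrow> nat \<Rightarrow> nat \<Rightarrow> tensor \<Rightarrow> real" where
  "tfro n1 n2 n3 T = sqrt (\<Sum>a<n1. \<Sum>b<n2. \<Sum>c<n3. (T a b c)\<^sup>2)"

definition fro2 :: "real mat \<Rightarrow> real" where
  "fro2 A = (\<Sum>a<dim_row A. \<Sum>b<dim_col A. (A $$ (a, b))\<^sup>2)"

(* matrix inverse (meaningful for invertible square matrices) *)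
definition minv :: "real mat \<Rightarrow> real mat" where
  "minv A = the (mat_inverse A)"

(* tr(A L_G A^T) = 1/2 sum_{j,k} G_{jk} ||A_{:,j} - A_{:,k}||^2, for A : d x n, G : n x n *)
definition trLap :: "real mat \<Rightarrow> real mat \<Rightarrow> real" where
  "trLap A G = (1/2) * (\<Sum>j<dim_col A. \<Sum>k<dim_col A.
      G $$ (j, k) * (\<Sum>t<dim_row A. (A $$ (t, j) - A $$ (t, k))\<^sup>2))"

definition lat_slice :: "nat \<Rightarrow> tensor \<Rightarrow> nat \<Rightarrow> real mat" where
  "lat_slice n T i = mat n n (\<lambda>(j, k). T j i k)"

definition fview :: "real \<Rightarrow> real mat \<Rightarrow> real mat \<Rightarrow> real mat \<Rightarrow> real mat \<Rightarrow> real mat \<Rightarrow> real" where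
  "fview lam Xi Pmat A Wi Gi = fro2 ((A - transpose_mat Wi * Xi) * Pmat) + lam * trLap A Gi"

definition mode3 :: "nat \<Rightarrow> tensor \<Rightarrow> real mat \<Rightarrow> tensor" where
  "mode3 n3 T Psi = (\<lambda>a b s. \<Sum>k<n3. Psi $$ (k, s) * T a b k)"

definition front_slice :: "nat \<Rightarrow> nat \<Rightarrow> tensor \<Rightarrow> nat \<Rightarrow> real mat" where
  "front_slice n1 n2 T k = mat n1 n2 (\<lambda>(a, b). T a b k)"

definition diag_l :: "nat \<Rightarrow> (nat \<Rightarrow> real) \<Rightarrow> real mat" where
  "diag_l l s = mat l l (\<lambda>(i, j). if i = j then s i else 0)"

(* (thin) singular value decomposition Y = U diag(sigma) V^T of an n1 x n2 matrix,
   l = min n1 n2, with singular values listed in increasing order: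
   sigma 0 is the smallest singular value, sigma (l-1) the largest *)
definition is_svd :: "real mat \<Rightarrow> real mat \<Rightarrow> (nat \<Rightarrow> real) \<Rightarrow> real mat \<Rightarrow> bool" where
  "is_svd Y U sigma V \<longleftrightarrow>
     (let n1 = dim_row Y; n2 = dim_col Y; l = min n1 n2 in
        U \<in> carrier_mat n1 l \<and> V \<in> carrier_mat n2 l \<and>
        transpose_mat U * U = 1\<^sub>m l \<and> transpose_mat V * V = 1\<^sub>m l \<and>
        (\<forall>j<l. 0 \<le> sigma j) \<and> (\<forall>i j. i \<le> j \<and> j < l \<longrightarrow> sigma i \<le> sigma j) \<and>
        Y = U * diag_l l sigma * transpose_mat V)"

definition scalar_prox :: "real \<Rightarrow> real \<Rightarrow> real \<Rightarrow> real \<Rightarrow> bool" where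
  "scalar_prox c p s x \<longleftrightarrow> 0 \<le> x \<and>
     (\<forall>y\<ge>0. (1/2) * (x - s)\<^sup>2 + c * x powr p \<le> (1/2) * (y - s)\<^sup>2 + c * y powr p)"

(* Z is a possible value of S_{tau,w,p}(Y): Z = U diag(gamma_j) V^T for an SVD
   Y = U Sigma V^T, where gamma_j is a global minimizer of
   min_{x>=0} 1/2 (x - sigma_j(Y))^2 + tau w_j x^p *)
definition is_shrink :: "real \<Rightarrow> (nat \<Rightarrow> real) \<Rightarrow> real \<Rightarrow> real mat \<Rightarrow> real mat \<Rightarrow> bool" where
  "is_shrink tau w p Y Z \<longleftrightarrow>
     (\<exists>U sigma V gam. is_svd Y U sigma V \<and>
        (\<forall>j<min (dim_row Y) (dim_col Y). scalar_prox (tau * w j) p (sigma j) (gam j)) \<and>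
        Z = U * diag_l (min (dim_row Y) (dim_col Y)) gam * transpose_mat V)"

definition graph_feasible :: "nat \<Rightarrow> nat \<Rightarrow> tensor \<Rightarrow> bool" where
  "graph_feasible n m G \<longleftrightarrow>
     (\<forall>j<n. \<forall>i<m. \<forall>k<n. 0 \<le> G j i k) \<and> (\<forall>j<n. \<forall>i<m. (\<Sum>k<n. G j i k) = 1)"

definition graph_obj :: "nat \<Rightarrow> nat \<Rightarrow> real \<Rightarrow> real \<Rightarrow> real \<Rightarrow> real mat \<Rightarrow> (nat \<Rightarrow> real)
     \<Rightarrow> (nat \<times> nat \<times> nat) set \<Rightarrow> tensor \<Rightarrow> tensor \<Rightarrow> tensor \<Rightarrow> tensor \<Rightarrow> real" where
  "graph_obj n m lam gam rho A dl Om M Y C G =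
     lam * (\<Sum>i<m. dl i * trLap A (lat_slice n G i))
     + gam / 2 * (\<Sum>a<n. \<Sum>b<m. \<Sum>c<n. if (a, b, c) \<in> Om then (G a b c - M a b c)\<^sup>2 else 0)
     + rho / 2 * (\<Sum>a<n. \<Sum>b<m. \<Sum>c<n. (G a b c - Y a b c + C a b c / rho)\<^sup>2)"

definition view_obj :: "nat \<Rightarrow> nat \<Rightarrow> real \<Rightarrow> (nat \<Rightarrow> real mat) \<Rightarrow> (nat \<Rightarrow> real mat)
     \<Rightarrow> (nat \<Rightarrow> real) \<Rightarrow> tensor \<Rightarrow> real mat \<Rightarrow> (nat \<Rightarrow> real mat) \<Rightarrow> real" where
  "view_obj n m lam X P dl G A W = (\<Sum>i<m. dl i * fview lam (X i) (P i) A (W i) (lat_slice n G i))"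

end

theory Submission
  imports Defs "Jordan_Normal_Form.Determinant"
begin


lemma orth_sum:
  fixes q :: "nat \<Rightarrow> nat \<Rightarrow> real"
  assumes "\<And>s s'. s < N2 \<Longrightarrow> s' < N2 \<Longrightarrow> (\<Sum>c<N1. q c s * q c s') = (if s = s' then 1 else 0)"
  shows "(\<Sum>c<N1. (\<Sum>s<N2. q c s * x s)\<^sup>2) = (\<Sum>s<N2. (x s)\<^sup>2)"
proof -
  have "(\<Sum>c<N1. (\<Sum>s<N2. q c s * x s)\<^sup>2) = (\<Sum>c<N1. \<Sum>s<N2. \<Sum>s'<N2. (q c s * q c s') * (x s * x s'))"
    by (simp add: power2_eq_square sum_product mult_ac)
  also have "\<dots> = (\<Sum>s<N2. \<Sum>s'<N2. (\<Sum>c<N1. q c s * q c s') * (x s * x s'))"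
    by (simp add: sum.swap[of _ "{..<N1}"] sum_distrib_right)
  also have "\<dots> = (\<Sum>s<N2. \<Sum>s'<N2. (if s = s' then x s * x s' else 0))"
    by (intro sum.cong refl) (simp add: assms)
  also have "\<dots> = (\<Sum>s<N2. (x s)\<^sup>2)"
    by (simp add: power2_eq_square)
  finally show ?thesis .
qed

lemma recon_sum:
  fixes q :: "nat \<Rightarrow> nat \<Rightarrow> real"
  assumes "\<And>c c'. c < N \<Longrightarrow> c' < N \<Longrightarrow> (\<Sum>s<N2. q c s * q c' s) = (if c = c' then 1 else 0)"
    and "c < N"
  shows "(\<Sum>s<N2. q c s * (\<Sum>c'<N. q c' s * y c')) = y c"
proof -
  have "(\<Sum>s<N2. q c s * (\<Sum>c'<N. q c' s * y c')) = (\<Sum>c'<N. (\<Sum>s<N2. q c s * q c' s) * y c')"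
    by (simp add: sum_distrib_left sum_distrib_right sum.swap[of _ "{..<N2}"] mult_ac)
  also have "\<dots> = (\<Sum>c'<N. if c = c' then y c' else 0)"
    by (intro sum.cong refl) (simp add: assms)
  also have "\<dots> = y c" using assms(2) by simp
  finally show ?thesis .
qed

lemma fro2_transpose: "fro2 (transpose_mat K) = fro2 K"
  unfolding fro2_def by (simp add: sum.swap[of _ "{..<dim_row K}"])

lemma fro2_orth_left:
  assumes U: "U \<in> carrier_mat n1 l" and K: "K \<in> carrier_mat l n2"
    and UU: "transpose_mat U * U = 1\<^sub>m l"
  shows "fro2 (U * K) = fro2 K"
proof -
  have orth: "(\<Sum>a<n1. U $$ (a, j) * U $$ (a, j')) = (if j = j' then 1 else 0)" if "j < l" "j' < l" for j j'
  proof -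
    have "(transpose_mat U * U) $$ (j, j') = (\<Sum>a<n1. U $$ (a, j) * U $$ (a, j'))"
      using U that by (simp add: scalar_prod_def lessThan_atLeast0)
    then show ?thesis using UU that by simp
  qed
  have "fro2 (U * K) = (\<Sum>a<n1. \<Sum>b<n2. (\<Sum>j<l. U $$ (a, j) * K $$ (j, b))\<^sup>2)"
    unfolding fro2_def using U K
    by (simp add: scalar_prod_def lessThan_atLeast0)
  also have "\<dots> = (\<Sum>b<n2. \<Sum>a<n1. (\<Sum>j<l. U $$ (a, j) * K $$ (j, b))\<^sup>2)"
    by (rule sum.swap)
  also have "\<dots> = (\<Sum>b<n2. \<Sum>j<l. (K $$ (j, b))\<^sup>2)"
    by (intro sum.cong refl orth_sum orth)
  also have "\<dots> = fro2 K" unfolding fro2_def using K by (simp add: sum.swap[of _ "{..<n2}"])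
  finally show ?thesis .
qed

lemma diag_l_transpose: "transpose_mat (diag_l l s) = diag_l l s"
  unfolding diag_l_def by (intro eq_matI) auto

lemma fro2_diag: "fro2 (diag_l l s) = (\<Sum>j<l. (s j)\<^sup>2)"
proof -
  have "fro2 (diag_l l s) = (\<Sum>a<l. \<Sum>b<l. if a = b then (s a)\<^sup>2 else 0)"
    unfolding fro2_def diag_l_def by (intro sum.cong refl) auto
  then show ?thesis by simp
qed

lemma fro2_svd:
  assumes U: "U \<in> carrier_mat n1 l" and V: "V \<in> carrier_mat n2 l"
    and UU: "transpose_mat U * U = 1\<^sub>m l" and VV: "transpose_mat V * V = 1\<^sub>m l"
  shows "fro2 (U * diag_l l s * transpose_mat V) = (\<Sum>j<l. (s j)\<^sup>2)"
proof -
  have D: "diag_l l s \<in> carrier_mat l l" unfolding diag_l_def by simp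
  have "fro2 (U * diag_l l s * transpose_mat V) = fro2 (U * (diag_l l s * transpose_mat V))"
    using U V D by (subst assoc_mult_mat) auto
  also have "\<dots> = fro2 (diag_l l s * transpose_mat V)"
    using U V D by (intro fro2_orth_left[OF U _ UU]) auto
  also have "\<dots> = fro2 (transpose_mat (diag_l l s * transpose_mat V))"
    by (simp add: fro2_transpose)
  also have "\<dots> = fro2 (V * diag_l l s)"
    using V D by (simp add: transpose_mult[OF D] diag_l_transpose)
  also have "\<dots> = fro2 (diag_l l s)"
    using V D by (intro fro2_orth_left[OF V _ VV]) auto
  finally show ?thesis by (simp add: fro2_diag)
qed



lemma powr_subadd:
  fixes a b p :: real
  assumes a: "0 \<le> a" and b: "0 \<le> b" and p: "0 < p" "p \<le> 1"
  shows "(a + b) powr p \<le> a powr p + b powr p"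
proof (cases "a = 0 \<or> b = 0")
  case True then show ?thesis by auto
next
  case False
  then have a': "0 < a" and b': "0 < b" using a b by auto
  have e: "\<And>x::real. 0 < x \<Longrightarrow> x powr p = x * x powr (p - 1)"
  proof -
    fix x :: real assume "0 < x"
    then show "x powr p = x * x powr (p - 1)" using powr_add[of x 1 "p - 1"] by simp
  qed
  have "(a + b) powr p = a * (a + b) powr (p - 1) + b * (a + b) powr (p - 1)"
    using e[of "a+b"] a' b' by (simp add: distrib_right)
  also have "\<dots> \<le> a * a powr (p - 1) + b * b powr (p - 1)"
    using a' b' p
    by (intro add_mono mult_left_mono powr_mono2') auto
  also have "\<dots> = a powr p + b powr p" using e a' b' by simp
  finally show ?thesis .
qed

lemma prox_bound:
  fixes c p s x :: real
  assumes c: "0 \<le> c" and s: "0 \<le> s" and p: "0 < p" "p \<le> 1"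
    and pr: "scalar_prox c p s x"
  shows "(x - s)\<^sup>2 \<le> 2 * c + 4 * c\<^sup>2"
proof -
  have x: "0 \<le> x" and opt: "(1/2) * (x - s)\<^sup>2 + c * x powr p \<le> (1/2) * (s - s)\<^sup>2 + c * s powr p"
    using pr s unfolding scalar_prox_def by auto
  have opt: "(1/2) * (x - s)\<^sup>2 + c * x powr p \<le> c * s powr p" using opt by simp
  show ?thesis
  proof (cases "s \<le> x")
    case True
    then have "c * s powr p \<le> c * x powr p" using c s p by (intro mult_left_mono powr_mono2) auto
    then have "(1/2) * (x - s)\<^sup>2 \<le> 0" using opt by linarith
    then have "(x - s)\<^sup>2 \<le> 0" by linarith
    moreover have "0 \<le> 2 * c + 4 * c\<^sup>2" using c by simp
    ultimately show ?thesis by linarith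
  next
    case False
    define y where "y = s - x"
    have y: "0 < y" using False y_def by simp
    have "s powr p \<le> x powr p + y powr p"
      using powr_subadd[of x y p] x y p unfolding y_def by simp
    then have "c * s powr p \<le> c * x powr p + c * y powr p" using c
      by (metis distrib_left mult_left_mono)
    then have key: "y\<^sup>2 \<le> 2 * c * y powr p" using opt unfolding y_def
      by (simp add: power2_commute)
    show ?thesis
    proof (cases "y \<le> 1")
      case True
      have "y powr p \<le> 1" using True y p by (intro powr_le1) auto
      then have "2 * c * y powr p \<le> 2 * c" using c by (simp add: mult_left_le)
      then have "y\<^sup>2 \<le> 2 * c + 4 * c\<^sup>2" using key c by (simp add: add_increasing2)
      then show ?thesis unfolding y_def by (simp add: power2_commute)
    next
      case False
      have "y powr p \<le> y powr 1" using False p by (intro powr_mono) auto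
      then have "y powr p \<le> y" using y by simp
      then have "y\<^sup>2 \<le> 2 * c * y" using key c by (meson mult_left_mono order_trans zero_le_mult_iff zero_le_numeral)
      then have "y \<le> 2 * c" using y by (simp add: power2_eq_square)
      then have "y\<^sup>2 \<le> (2 * c)\<^sup>2" using y by (intro power_mono) auto
      then show ?thesis using c unfolding y_def by (simp add: power2_commute power_mult_distrib)
    qed
  qed
qed

lemma shrink_bound:
  fixes tau p wm :: real
  assumes sh: "is_shrink tau w p Y Z" and Ycar: "Y \<in> carrier_mat n1 n2"
    and tau: "0 \<le> tau" and p: "0 < p" "p \<le> 1"
    and wb: "\<And>j. j < min n1 n2 \<Longrightarrow> 0 \<le> w j \<and> w j \<le> wm"
  shows "fro2 (Y - Z) \<le> real (min n1 n2) * (2 * (tau * wm) + 4 * (tau * wm)\<^sup>2)"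
proof -
  define l where "l = min n1 n2"
  obtain U sigma V gam where svd: "is_svd Y U sigma V"
    and pr: "\<forall>j<l. scalar_prox (tau * w j) p (sigma j) (gam j)"
    and Zd: "Z = U * diag_l l gam * transpose_mat V"
    using sh Ycar unfolding is_shrink_def l_def by auto
  have U: "U \<in> carrier_mat n1 l" and V: "V \<in> carrier_mat n2 l"
    and UU: "transpose_mat U * U = 1\<^sub>m l" and VV: "transpose_mat V * V = 1\<^sub>m l"
    and sg: "\<forall>j<l. 0 \<le> sigma j"
    and Yd: "Y = U * diag_l l sigma * transpose_mat V"
    using svd Ycar unfolding is_svd_def l_def Let_def by auto
  have D1: "diag_l l sigma \<in> carrier_mat l l" and D2: "diag_l l gam \<in> carrier_mat l l"
    unfolding diag_l_def by auto
  have dd: "diag_l l sigma - diag_l l gam = diag_l l (\<lambda>j. sigma j - gam j)"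
    unfolding diag_l_def by (intro eq_matI) auto
  have "Y - Z = (U * diag_l l sigma - U * diag_l l gam) * transpose_mat V"
    unfolding Yd Zd using U V D1 D2 by (subst minus_mult_distrib_mat) auto
  also have "\<dots> = U * diag_l l (\<lambda>j. sigma j - gam j) * transpose_mat V"
    using U D1 D2 by (subst mult_minus_distrib_mat[symmetric]) (auto simp: dd)
  finally have "fro2 (Y - Z) = (\<Sum>j<l. (sigma j - gam j)\<^sup>2)"
    using fro2_svd[OF U V UU VV] by simp
  also have "\<dots> \<le> (\<Sum>j<l. 2 * (tau * wm) + 4 * (tau * wm)\<^sup>2)"
  proof (intro sum_mono)
    fix j assume j: "j \<in> {..<l}"
    have w: "0 \<le> w j" "w j \<le> wm" using wb j unfolding l_def by auto
    have "(gam j - sigma j)\<^sup>2 \<le> 2 * (tau * w j) + 4 * (tau * w j)\<^sup>2"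
      using prox_bound[of "tau * w j" "sigma j" p "gam j"] pr sg j tau w p by auto
    also have "\<dots> \<le> 2 * (tau * wm) + 4 * (tau * wm)\<^sup>2"
      using w tau by (intro add_mono mult_left_mono power_mono mult_left_mono) auto
    finally show "(sigma j - gam j)\<^sup>2 \<le> 2 * (tau * wm) + 4 * (tau * wm)\<^sup>2"
      by (simp add: power2_commute)
  qed
  also have "\<dots> = real l * (2 * (tau * wm) + 4 * (tau * wm)\<^sup>2)" by simp
  finally show ?thesis unfolding l_def .
qed



lemma sq2_diff: "(x - y)\<^sup>2 \<le> 2 * x\<^sup>2 + 2 * (y::real)\<^sup>2"
proof -
  have "0 \<le> (x + y)\<^sup>2" by simp
  moreover have "(x - y)\<^sup>2 = x\<^sup>2 + y\<^sup>2 - 2 * x * y" by (rule power2_diff)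
  moreover have "(x + y)\<^sup>2 = x\<^sup>2 + y\<^sup>2 + 2 * x * y" by (rule power2_sum)
  ultimately show ?thesis by linarith
qed

lemma sq2_sum: "(x + y)\<^sup>2 \<le> 2 * x\<^sup>2 + 2 * (y::real)\<^sup>2"
  using sq2_diff[of x "-y"] by simp

lemma sq3_sum: "(x + y + z)\<^sup>2 \<le> 3 * x\<^sup>2 + 3 * y\<^sup>2 + 3 * (z::real)\<^sup>2"
proof -
  have "3 * x\<^sup>2 + 3 * y\<^sup>2 + 3 * z\<^sup>2 - (x + y + z)\<^sup>2 = (x - y)\<^sup>2 + (y - z)\<^sup>2 + (x - z)\<^sup>2"
    by (simp add: power2_eq_square algebra_simps)
  moreover have "0 \<le> (x - y)\<^sup>2 + (y - z)\<^sup>2 + (x - z)\<^sup>2" by simp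
  ultimately show ?thesis by linarith
qed

lemma fro2_nonneg: "0 \<le> fro2 A"
  unfolding fro2_def by (intro sum_nonneg) auto

lemma feas_le1:
  assumes "graph_feasible n m Gf" "j < n" "i < m" "k < n"
  shows "0 \<le> Gf j i k \<and> Gf j i k \<le> 1"
proof -
  have nn: "\<forall>k'<n. 0 \<le> Gf j i k'" and s: "(\<Sum>k'<n. Gf j i k') = 1"
    using assms unfolding graph_feasible_def by auto
  have "Gf j i k \<le> (\<Sum>k'<n. Gf j i k')"
    by (rule member_le_sum) (use assms nn in auto)
  then show ?thesis using s nn assms by auto
qed

lemma trLap_nonneg:
  assumes "graph_feasible n m Gf" "i < m" "A \<in> carrier_mat d n"
  shows "0 \<le> trLap A (lat_slice n Gf i)"
  unfolding trLap_def lat_slice_def using assms feas_le1[OF assms(1) _ assms(2)]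
  by (intro mult_nonneg_nonneg sum_nonneg) auto

lemma sumsq_A:
  assumes A: "A \<in> carrier_mat d n" and AA: "A * transpose_mat A = 1\<^sub>m d"
  shows "(\<Sum>j<n. \<Sum>t<d. (A $$ (t, j))\<^sup>2) = real d"
proof -
  have "(\<Sum>j<n. (A $$ (t, j))\<^sup>2) = 1" if "t < d" for t
  proof -
    have "(A * transpose_mat A) $$ (t, t) = (\<Sum>j<n. (A $$ (t, j))\<^sup>2)"
      using A that by (simp add: scalar_prod_def lessThan_atLeast0 power2_eq_square)
    then show ?thesis using AA that by simp
  qed
  then have "(\<Sum>t<d. \<Sum>j<n. (A $$ (t, j))\<^sup>2) = real d" by simp
  then show ?thesis by (simp add: sum.swap[of _ "{..<n}"])
qed

lemma trLap_le:
  assumes F: "graph_feasible n m Gf" and i: "i < m" and A: "A \<in> carrier_mat d n"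
    and AA: "A * transpose_mat A = 1\<^sub>m d"
  shows "trLap A (lat_slice n Gf i) \<le> 2 * real n * real d"
proof -
  have "trLap A (lat_slice n Gf i) = (1/2) * (\<Sum>j<n. \<Sum>k<n. Gf j i k * (\<Sum>t<d. (A $$ (t, j) - A $$ (t, k))\<^sup>2))"
    unfolding trLap_def lat_slice_def using A by simp
  also have "\<dots> \<le> (1/2) * (\<Sum>j<n. \<Sum>k<n. (\<Sum>t<d. 2 * (A $$ (t, j))\<^sup>2 + 2 * (A $$ (t, k))\<^sup>2))"
  proof (intro mult_left_mono sum_mono)
    fix j k assume jk: "j \<in> {..<n}" "k \<in> {..<n}"
    have g: "0 \<le> Gf j i k" "Gf j i k \<le> 1" using feas_le1[OF F _ i] jk by auto
    have "(\<Sum>t<d. (A $$ (t, j) - A $$ (t, k))\<^sup>2) \<le> (\<Sum>t<d. 2 * (A $$ (t, j))\<^sup>2 + 2 * (A $$ (t, k))\<^sup>2)"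
    proof (intro sum_mono)
      fix t
      show "(A $$ (t, j) - A $$ (t, k))\<^sup>2 \<le> 2 * (A $$ (t, j))\<^sup>2 + 2 * (A $$ (t, k))\<^sup>2"
        by (rule sq2_diff)
    qed
    moreover have "0 \<le> (\<Sum>t<d. (A $$ (t, j) - A $$ (t, k))\<^sup>2)" by (intro sum_nonneg) auto
    ultimately show "Gf j i k * (\<Sum>t<d. (A $$ (t, j) - A $$ (t, k))\<^sup>2) \<le> (\<Sum>t<d. 2 * (A $$ (t, j))\<^sup>2 + 2 * (A $$ (t, k))\<^sup>2)"
      using g by (meson mult_left_le_one_le order_trans)
  qed auto
  also have "\<dots> = (1/2) * (2 * real n * (\<Sum>j<n. \<Sum>t<d. (A $$ (t, j))\<^sup>2) + 2 * real n * (\<Sum>k<n. \<Sum>t<d. (A $$ (t, k))\<^sup>2))"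
    by (simp add: sum.distrib sum_distrib_left sum.swap[of _ "{..<n}" "{..<d}"] mult_ac)
  also have "\<dots> = 2 * real n * real d" using sumsq_A[OF A AA] by simp
  finally show ?thesis .
qed

lemma lin_term_le:
  fixes lam F t N :: real
  assumes lam: "0 < lam" and F: "0 \<le> F" and t: "0 \<le> t" "t \<le> T" and N: "0 \<le> N" "N \<le> Nm"
  shows "lam * (N / sqrt (F + lam * t) * t) \<le> Nm * sqrt (lam * T)"
proof (cases "t = 0")
  case True then show ?thesis using N lam t by auto
next
  case False
  then have tp: "0 < t" using t by simp
  have s1: "sqrt (lam * t) \<le> sqrt (F + lam * t)" using F by simp
  have s0: "0 < sqrt (lam * t)" using lam tp by simp
  have s2: "0 < sqrt (F + lam * t)" using s0 s1 by linarith
  have "lam * (N / sqrt (F + lam * t) * t) = N * (lam * t) / sqrt (F + lam * t)" by simp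
  also have "\<dots> \<le> N * (lam * t) / sqrt (lam * t)"
    using s1 s0 s2 N lam tp by (intro divide_left_mono) auto
  also have "\<dots> = N * sqrt (lam * t)"
  proof -
    have "(lam * t) / sqrt (lam * t) = sqrt (lam * t)" by (rule real_div_sqrt) (use lam tp in simp)
    then show ?thesis by (metis times_divide_eq_right)
  qed
  also have "\<dots> \<le> Nm * sqrt (lam * T)"
    using N t lam by (intro mult_mono) auto
  finally show ?thesis .
qed

definition ss :: "nat \<Rightarrow> nat \<Rightarrow> tensor \<Rightarrow> real" where
  "ss n m T = (\<Sum>a<n. \<Sum>b<m. \<Sum>c<n. (T a b c)\<^sup>2)"

lemma ss_nonneg: "0 \<le> ss n m T"
  unfolding ss_def by (intro sum_nonneg) auto

lemma tfro_ss: "tfro n m n T = sqrt (ss n m T)"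
  unfolding tfro_def ss_def ..

lemma ss_cong: "(\<And>a b c. a < n \<Longrightarrow> b < m \<Longrightarrow> c < n \<Longrightarrow> T a b c = S a b c) \<Longrightarrow> ss n m T = ss n m S"
  unfolding ss_def by (intro sum.cong refl) auto

lemma ss_add2:
  assumes "\<And>a b c. a < n \<Longrightarrow> b < m \<Longrightarrow> c < n \<Longrightarrow> T a b c = x * S1 a b c + y * S2 a b c"
  shows "ss n m T \<le> 2 * x\<^sup>2 * ss n m S1 + 2 * y\<^sup>2 * ss n m S2"
proof -
  have "ss n m T \<le> (\<Sum>a<n. \<Sum>b<m. \<Sum>c<n. 2 * x\<^sup>2 * (S1 a b c)\<^sup>2 + 2 * y\<^sup>2 * (S2 a b c)\<^sup>2)"
    unfolding ss_def
  proof (intro sum_mono)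
    fix a b c assume "a \<in> {..<n}" "b \<in> {..<m}" "c \<in> {..<n}"
    then have e: "T a b c = x * S1 a b c + y * S2 a b c" using assms by auto
    have "(x * S1 a b c + y * S2 a b c)\<^sup>2 \<le> 2 * (x * S1 a b c)\<^sup>2 + 2 * (y * S2 a b c)\<^sup>2"
      by (rule sq2_sum)
    then show "(T a b c)\<^sup>2 \<le> 2 * x\<^sup>2 * (S1 a b c)\<^sup>2 + 2 * y\<^sup>2 * (S2 a b c)\<^sup>2"
      by (simp add: e power_mult_distrib)
  qed
  also have "\<dots> = 2 * x\<^sup>2 * ss n m S1 + 2 * y\<^sup>2 * ss n m S2"
    unfolding ss_def by (simp add: sum.distrib sum_distrib_left)
  finally show ?thesis .
qed

lemma ss_add3:
  assumes "\<And>a b c. a < n \<Longrightarrow> b < m \<Longrightarrow> c < n \<Longrightarrow> T a b c = S1 a b c + S2 a b c + S3 a b c"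
  shows "ss n m T \<le> 3 * ss n m S1 + 3 * ss n m S2 + 3 * ss n m S3"
proof -
  have "ss n m T \<le> (\<Sum>a<n. \<Sum>b<m. \<Sum>c<n. 3 * (S1 a b c)\<^sup>2 + 3 * (S2 a b c)\<^sup>2 + 3 * (S3 a b c)\<^sup>2)"
    unfolding ss_def
  proof (intro sum_mono)
    fix a b c assume "a \<in> {..<n}" "b \<in> {..<m}" "c \<in> {..<n}"
    then have e: "T a b c = S1 a b c + S2 a b c + S3 a b c" using assms by auto
    have "(S1 a b c + S2 a b c + S3 a b c)\<^sup>2 \<le> 3 * (S1 a b c)\<^sup>2 + 3 * (S2 a b c)\<^sup>2 + 3 * (S3 a b c)\<^sup>2"
      by (rule sq3_sum)
    then show "(T a b c)\<^sup>2 \<le> 3 * (S1 a b c)\<^sup>2 + 3 * (S2 a b c)\<^sup>2 + 3 * (S3 a b c)\<^sup>2"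
      by (simp add: e)
  qed
  also have "\<dots> = 3 * ss n m S1 + 3 * ss n m S2 + 3 * ss n m S3"
    unfolding ss_def by (simp add: sum.distrib sum_distrib_left)
  finally show ?thesis .
qed

lemma ss_lim: "(\<lambda>k. ss n m (T k)) \<longlonglongrightarrow> 0 \<Longrightarrow> (\<lambda>k. tfro n m n (T k)) \<longlonglongrightarrow> 0"
  unfolding tfro_ss using tendsto_real_sqrt by fastforce

lemma squeeze0:
  fixes f g :: "nat \<Rightarrow> real"
  assumes "\<And>k. 0 \<le> f k" "\<And>k. f k \<le> g k" "g \<longlonglongrightarrow> 0"
  shows "f \<longlonglongrightarrow> 0"
  by (rule tendsto_sandwich[where f="\<lambda>_. 0" and g=f and h=g]) (use assms in auto)



theorem theorem2:
  fixes n m d r :: nat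
    and dv :: "nat \<Rightarrow> nat"
    and X P :: "nat \<Rightarrow> real mat"
    and pres :: "nat \<Rightarrow> nat \<Rightarrow> bool"
    and M :: tensor
    and Om :: "(nat \<times> nat \<times> nat) set"
    and lam mu gam p :: real
    and w :: "nat \<Rightarrow> real"
    and Phi Phic :: "real mat"
    and A :: "nat \<Rightarrow> real mat"
    and W :: "nat \<Rightarrow> nat \<Rightarrow> real mat"
    and dl :: "nat \<Rightarrow> nat \<Rightarrow> real"
    and rho :: "nat \<Rightarrow> real"
    and G Y C :: "nat \<Rightarrow> tensor"
  assumes X_dim: "\<And>i. i < m \<Longrightarrow> X i \<in> carrier_mat (dv i) n"
    and P_def: "\<And>i. i < m \<Longrightarrow> P i = mat n n (\<lambda>(j, k). if j = k \<and> pres i j then 1 else 0)"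
    and X_missing: "\<And>i j t. i < m \<Longrightarrow> j < n \<Longrightarrow> \<not> pres i j \<Longrightarrow> t < dv i \<Longrightarrow> X i $$ (t, j) = 0"
    and X_inv: "\<And>i. i < m \<Longrightarrow> invertible_mat (X i * P i * transpose_mat (X i))"
    and params: "lam > 0" "mu > 0" "gam > 0" "0 < p" "p \<le> 1"
    and w_mono: "\<And>i j. i \<le> j \<Longrightarrow> j < min n m \<Longrightarrow> w j \<le> w i"
    and w_nonneg: "\<And>j. j < min n m \<Longrightarrow> 0 \<le> w j"
    and r_le: "r \<le> n"
    and Phi_dim: "Phi \<in> carrier_mat n r" and Phi_orth: "transpose_mat Phi * Phi = 1\<^sub>m r"
    and Phic_dim: "Phic \<in> carrier_mat n (n - r)"
    and Phibar_orth: "transpose_mat (mat n n (\<lambda>(a, b). if b < r then Phi $$ (a, b) else Phic $$ (a, b - r)))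
                       * mat n n (\<lambda>(a, b). if b < r then Phi $$ (a, b) else Phic $$ (a, b - r)) = 1\<^sub>m n"
    \<comment> \<open>initialization\<close>
    and init_rho: "rho 0 = 1 / 10000"
    and init_dl: "\<And>i. i < m \<Longrightarrow> dl 0 i = 1 / real m"
    and init_C: "\<And>a b c. a < n \<Longrightarrow> b < m \<Longrightarrow> c < n \<Longrightarrow> C 0 a b c = 0"
    and init_G: "\<And>a b c. a < n \<Longrightarrow> b < m \<Longrightarrow> c < n \<Longrightarrow> G 0 a b c = M a b c"
    and init_Y: "\<And>a b c. a < n \<Longrightarrow> b < m \<Longrightarrow> c < n \<Longrightarrow> Y 0 a b c = M a b c"
    \<comment> \<open>step (1)\<close>
    and step1_A: "\<And>k. A (Suc k) \<in> carrier_mat d n \<and> A (Suc k) * transpose_mat (A (Suc k)) = 1\<^sub>m d"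
    and step1_W: "\<And>k i. i < m \<Longrightarrow>
        W (Suc k) i = minv (X i * P i * transpose_mat (X i)) * X i * P i * transpose_mat (A (Suc k))"
    and step1_min: "\<And>k A' W'. A' \<in> carrier_mat d n \<Longrightarrow> A' * transpose_mat A' = 1\<^sub>m d \<Longrightarrow>
        (\<forall>i<m. W' i \<in> carrier_mat (dv i) d) \<Longrightarrow>
        view_obj n m lam X P (dl k) (G k) (A (Suc k)) (W (Suc k)) \<le> view_obj n m lam X P (dl k) (G k) A' W'"
    \<comment> \<open>step (2)\<close>
    and step2: "\<And>k i. i < m \<Longrightarrow>
        dl (Suc k) i = real (card {j. j < n \<and> pres i j})
          / sqrt (fview lam (X i) (P i) (A (Suc k)) (W (Suc k) i) (lat_slice n (G k) i))"
    \<comment> \<open>step (3)\<close>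
    and step3_feas: "\<And>k. graph_feasible n m (G (Suc k))"
    and step3_min: "\<And>k G'. graph_feasible n m G' \<Longrightarrow>
        graph_obj n m lam gam (rho k) (A (Suc k)) (dl (Suc k)) Om M (Y k) (C k) (G (Suc k))
          \<le> graph_obj n m lam gam (rho k) (A (Suc k)) (dl (Suc k)) Om M (Y k) (C k) G'"
    \<comment> \<open>step (4)\<close>
    and step4: "\<And>k. \<exists>Z :: tensor.
        (\<forall>s<r. is_shrink (mu / rho k) w p
            (front_slice n m (mode3 n (\<lambda>a b c. G (Suc k) a b c + C k a b c / rho k) Phi) s)
            (front_slice n m Z s)) \<and>
        (\<forall>a<n. \<forall>b<m. \<forall>s. r \<le> s \<and> s < n \<longrightarrow>
            Z a b s = mode3 n (\<lambda>a b c. G (Suc k) a b c + C k a b c / rho k) Phic a b (s - r)) \<and>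
        (\<forall>a<n. \<forall>b<m. \<forall>c<n. Y (Suc k) a b c =
            mode3 n Z (transpose_mat (mat n n (\<lambda>(a, b). if b < r then Phi $$ (a, b) else Phic $$ (a, b - r)))) a b c)"
    \<comment> \<open>step (5)\<close>
    and step5: "\<And>k a b c. a < n \<Longrightarrow> b < m \<Longrightarrow> c < n \<Longrightarrow>
        C (Suc k) a b c = C k a b c + rho k * (G (Suc k) a b c - Y (Suc k) a b c)"
    \<comment> \<open>step (6)\<close>
    and step6: "\<And>k. rho (Suc k) = 11 / 10 * rho k"
  shows "(\<lambda>k. tfro n m n (\<lambda>a b c. G k a b c - Y k a b c)) \<longlonglongrightarrow> 0
    \<and> (\<lambda>k. tfro n m n (\<lambda>a b c. G (Suc k) a b c - G k a b c)) \<longlonglongrightarrow> 0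
    \<and> (\<lambda>k. tfro n m n (\<lambda>a b c. Y (Suc k) a b c - Y k a b c)) \<longlonglongrightarrow> 0"
proof -
  define Qm where "Qm = mat n n (\<lambda>(a, b). if b < r then Phi $$ (a, b) else Phic $$ (a, b - r))"
  have Qcar: "Qm \<in> carrier_mat n n" unfolding Qm_def by simp
  have QtQ: "transpose_mat Qm * Qm = 1\<^sub>m n" using Phibar_orth unfolding Qm_def .
  have QQt: "Qm * transpose_mat Qm = 1\<^sub>m n"
    using mat_mult_left_right_inverse[of "transpose_mat Qm" n Qm] QtQ Qcar by auto
  define q where "q c s = Qm $$ (c, s)" for c s
  have colorth: "(\<Sum>c<n. q c s * q c s') = (if s = s' then 1 else 0)" if "s < n" "s' < n" for s s'
  proof -
    have "(transpose_mat Qm * Qm) $$ (s, s') = (\<Sum>c<n. q c s * q c s')"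
      using Qcar that unfolding q_def by (simp add: scalar_prod_def lessThan_atLeast0)
    then show ?thesis using QtQ that by simp
  qed
  have roworth: "(\<Sum>s<n. q c s * q c' s) = (if c = c' then 1 else 0)" if "c < n" "c' < n" for c c'
  proof -
    have "(Qm * transpose_mat Qm) $$ (c, c') = (\<Sum>s<n. q c s * q c' s)"
      using Qcar that unfolding q_def by (simp add: scalar_prod_def lessThan_atLeast0)
    then show ?thesis using QQt that by simp
  qed
  have qPhi: "q c s = Phi $$ (c, s)" if "c < n" "s < r" for c s
    using that r_le unfolding q_def Qm_def by simp
  have qPhic: "q c s = Phic $$ (c, s - r)" if "c < n" "r \<le> s" "s < n" for c s
    using that unfolding q_def Qm_def by simp
  have rho_eq: "rho k = (11/10)^k / 10000" for k
    by (induction k) (simp_all add: init_rho step6)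
  have rho_pos: "0 < rho k" for k unfolding rho_eq by simp
  have tau_eq: "mu / rho k = (mu * 10000) * (10/11)^k" for k
    unfolding rho_eq by (simp add: power_divide)
  have tau_lim: "(\<lambda>k. mu / rho k) \<longlonglongrightarrow> 0"
    unfolding tau_eq by (intro tendsto_mult_right_zero LIMSEQ_power_zero) auto
  define B where "B k = (\<lambda>a b c. G (Suc k) a b c + C k a b c / rho k)" for k
  define E where "E k = (\<lambda>a b c. B k a b c - Y (Suc k) a b c)" for k
  define l where "l = min n m"
  define bnd where "bnd k = real r * real l * (2 * ((mu / rho k) * w 0) + 4 * ((mu / rho k) * w 0)\<^sup>2)" for k
  have wb: "0 \<le> w j \<and> w j \<le> w 0" if "j < min n m" for j
    using w_nonneg[OF that] w_mono[of 0 j] that by auto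
  have e_bound: "ss n m (E k) \<le> bnd k" for k
  proof -
    obtain Z :: tensor where
      Z1: "\<forall>s<r. is_shrink (mu / rho k) w p
            (front_slice n m (mode3 n (B k) Phi) s) (front_slice n m Z s)"
      and Z2: "\<forall>a<n. \<forall>b<m. \<forall>s. r \<le> s \<and> s < n \<longrightarrow> Z a b s = mode3 n (B k) Phic a b (s - r)"
      and Z3: "\<forall>a<n. \<forall>b<m. \<forall>c<n. Y (Suc k) a b c = mode3 n Z (transpose_mat Qm) a b c"
      using step4[of k] unfolding B_def Qm_def by blast
    define BQ where "BQ a b s = (\<Sum>c<n. q c s * B k a b c)" for a b s
    define D where "D a b s = BQ a b s - Z a b s" for a b s
    have Ye: "Y (Suc k) a b c = (\<Sum>s<n. q c s * Z a b s)" if "a < n" "b < m" "c < n" for a b c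
      using Z3 that Qcar unfolding mode3_def q_def by (auto intro!: sum.cong)
    have Be: "B k a b c = (\<Sum>s<n. q c s * BQ a b s)" if "c < n" for a b c
      unfolding BQ_def using recon_sum[where q=q and N=n and ?N2.0=n and c=c and y="\<lambda>c'. B k a b c'", OF roworth that] by simp
    have Ee: "E k a b c = (\<Sum>s<n. q c s * D a b s)" if "a < n" "b < m" "c < n" for a b c
      unfolding E_def D_def using Ye[OF that] Be[OF that(3)]
      by (simp add: right_diff_distrib sum_subtractf)
    have D0: "D a b s = 0" if "a < n" "b < m" "r \<le> s" "s < n" for a b s
    proof -
      have "BQ a b s = mode3 n (B k) Phic a b (s - r)"
        unfolding BQ_def mode3_def using that qPhic by (intro sum.cong) auto
      then show ?thesis unfolding D_def using Z2 that by auto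
    qed
    have "ss n m (E k) = (\<Sum>a<n. \<Sum>b<m. \<Sum>c<n. (\<Sum>s<n. q c s * D a b s)\<^sup>2)"
      unfolding ss_def by (intro sum.cong refl) (simp add: Ee)
    also have "\<dots> = (\<Sum>a<n. \<Sum>b<m. \<Sum>s<n. (D a b s)\<^sup>2)"
      by (intro sum.cong refl orth_sum colorth)
    also have "\<dots> = (\<Sum>a<n. \<Sum>b<m. \<Sum>s<r. (D a b s)\<^sup>2)"
    proof -
      have *: "(\<Sum>s<n. (D a b s)\<^sup>2) = (\<Sum>s<r. (D a b s)\<^sup>2)" if ab: "a < n" "b < m" for a b
        by (rule sum.mono_neutral_right) (use r_le ab D0 in auto)
      show ?thesis by (rule sum.cong[OF refl], rule sum.cong[OF refl]) (simp add: *)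
    qed
    also have "\<dots> = (\<Sum>s<r. \<Sum>a<n. \<Sum>b<m. (D a b s)\<^sup>2)"
      by (simp add: sum.swap[of _ "{..<r}"])
    also have "\<dots> = (\<Sum>s<r. fro2 (front_slice n m (mode3 n (B k) Phi) s - front_slice n m Z s))"
    proof (intro sum.cong refl)
      fix s assume s: "s \<in> {..<r}"
      have "BQ a b s = mode3 n (B k) Phi a b s" if "a < n" for a b
        unfolding BQ_def mode3_def using s qPhi by (intro sum.cong) auto
      then show "(\<Sum>a<n. \<Sum>b<m. (D a b s)\<^sup>2) = fro2 (front_slice n m (mode3 n (B k) Phi) s - front_slice n m Z s)"
        unfolding fro2_def front_slice_def D_def by (intro sum.cong) auto
    qed
    also have "\<dots> \<le> (\<Sum>s<r. real l * (2 * ((mu / rho k) * w 0) + 4 * ((mu / rho k) * w 0)\<^sup>2))"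
    proof (intro sum_mono)
      fix s assume s: "s \<in> {..<r}"
      show "fro2 (front_slice n m (mode3 n (B k) Phi) s - front_slice n m Z s)
          \<le> real l * (2 * ((mu / rho k) * w 0) + 4 * ((mu / rho k) * w 0)\<^sup>2)"
        unfolding l_def
        by (rule shrink_bound) (use Z1 s rho_pos params wb in \<open>auto simp: front_slice_def less_imp_le\<close>)
    qed
    also have "\<dots> = bnd k" unfolding bnd_def by simp
    finally show ?thesis .
  qed
  have bnd_lim: "bnd \<longlonglongrightarrow> 0"
  proof -
    have "bnd \<longlonglongrightarrow> real r * real l * (2 * (0 * w 0) + 4 * (0 * w 0)\<^sup>2)"
      unfolding bnd_def[abs_def] by (intro tendsto_intros tau_lim)
    then show ?thesis by simp
  qed
  have e_lim: "(\<lambda>k. ss n m (E k)) \<longlonglongrightarrow> 0"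
    by (rule squeeze0[OF ss_nonneg e_bound bnd_lim])
  have e_lim1: "(\<lambda>k. ss n m (E (Suc k))) \<longlonglongrightarrow> 0"
    using e_lim by (rule LIMSEQ_Suc)
  have C1: "C (Suc k) a b c = rho k * E k a b c" if "a < n" "b < m" "c < n" for k a b c
  proof -
    have "rho k * E k a b c = rho k * G (Suc k) a b c + C k a b c - rho k * Y (Suc k) a b c"
      using rho_pos[of k] unfolding E_def B_def by (simp add: algebra_simps)
    then show ?thesis using step5[OF that, of k] by (simp add: algebra_simps)
  qed
  have GY: "G (Suc k) a b c - Y (Suc k) a b c = E k a b c - C k a b c / rho k" for k a b c
    unfolding E_def B_def by simp
  have CR: "C (Suc k) a b c / rho (Suc k) = (10/11) * E k a b c" if "a < n" "b < m" "c < n" for k a b c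
    unfolding C1[OF that, of k] step6[of k] using rho_pos[of k] by (simp add: field_simps)
  have f1_lim: "(\<lambda>k. ss n m (\<lambda>a b c. G k a b c - Y k a b c)) \<longlonglongrightarrow> 0"
  proof -
    have le: "ss n m (\<lambda>a b c. G (Suc (Suc j)) a b c - Y (Suc (Suc j)) a b c)
        \<le> 2 * 1\<^sup>2 * ss n m (E (Suc j)) + 2 * (- (10/11))\<^sup>2 * ss n m (E j)" for j
      by (rule ss_add2) (simp add: GY CR)
    have "(\<lambda>j. 2 * 1\<^sup>2 * ss n m (E (Suc j)) + 2 * (- (10/11::real))\<^sup>2 * ss n m (E j)) \<longlonglongrightarrow> 0"
      by (intro tendsto_add_zero tendsto_mult_right_zero e_lim e_lim1)
    then have "(\<lambda>j. ss n m (\<lambda>a b c. G (Suc (Suc j)) a b c - Y (Suc (Suc j)) a b c)) \<longlonglongrightarrow> 0"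
      by (rule squeeze0[OF ss_nonneg le])
    note lim2 = this
    show ?thesis by (rule LIMSEQ_imp_Suc, rule LIMSEQ_imp_Suc, rule lim2)
  qed
  define Tt where "Tt k = (\<lambda>a b c. Y k a b c - C k a b c / rho k)" for k
  define K2 where "K2 = (\<Sum>a<n. \<Sum>b<m. \<Sum>c<n. (1 + \<bar>M a b c\<bar>)\<^sup>2)"
  define Kc where "Kc = real m * (real n * sqrt (lam * (2 * real n * real d))) + gam / 2 * K2"
  have h_le: "ss n m (\<lambda>a b c. G (Suc (Suc j)) a b c - Tt (Suc (Suc j)) a b c)
      \<le> 2 * (21/11)\<^sup>2 * ss n m (E (Suc j)) + 2 * (- (10/11))\<^sup>2 * ss n m (E j)" for j
  proof (rule ss_add2)
    fix a b c assume abc: "a < n" "b < m" "c < n"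
    have "G (Suc (Suc j)) a b c - Tt (Suc (Suc j)) a b c
        = (G (Suc (Suc j)) a b c - Y (Suc (Suc j)) a b c) + C (Suc (Suc j)) a b c / rho (Suc (Suc j))"
      by (simp add: Tt_def)
    also have "\<dots> = E (Suc j) a b c - (10/11) * E j a b c + (10/11) * E (Suc j) a b c"
      by (simp only: GY CR[OF abc])
    finally show "G (Suc (Suc j)) a b c - Tt (Suc (Suc j)) a b c = 21 / 11 * E (Suc j) a b c + - (10 / 11) * E j a b c"
      by simp
  qed
  have h_lim: "(\<lambda>j. ss n m (\<lambda>a b c. G (Suc (Suc j)) a b c - Tt (Suc (Suc j)) a b c)) \<longlonglongrightarrow> 0"
  proof -
    have "(\<lambda>j. 2 * (21/11)\<^sup>2 * ss n m (E (Suc j)) + 2 * (- (10/11::real))\<^sup>2 * ss n m (E j)) \<longlonglongrightarrow> 0"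
      by (intro tendsto_add_zero tendsto_mult_right_zero e_lim e_lim1)
    then show ?thesis by (rule squeeze0[OF ss_nonneg h_le])
  qed
  have gstep: "ss n m (\<lambda>a b c. G (Suc k) a b c - Tt k a b c)
      \<le> ss n m (\<lambda>a b c. G k a b c - Tt k a b c) + 2 * Kc / rho k" if k1: "1 \<le> k" for k
  proof -
    obtain j where kj: "k = Suc j" using k1 by (cases k) auto
    have Fk: "graph_feasible n m (G k)" unfolding kj by (rule step3_feas)
    have F1: "graph_feasible n m (G (Suc k))" by (rule step3_feas)
    have Acar: "A (Suc k) \<in> carrier_mat d n" and AA: "A (Suc k) * transpose_mat (A (Suc k)) = 1\<^sub>m d"
      using step1_A by auto
    let ?Lin = "\<lambda>GG. (\<Sum>i<m. dl (Suc k) i * trLap (A (Suc k)) (lat_slice n GG i))"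
    let ?Qo = "\<lambda>GG. (\<Sum>a<n. \<Sum>b<m. \<Sum>c<n. if (a, b, c) \<in> Om then (GG a b c - M a b c)\<^sup>2 else 0)"
    let ?R = "\<lambda>GG. (\<Sum>a<n. \<Sum>b<m. \<Sum>c<n. (GG a b c - Y k a b c + C k a b c / rho k)\<^sup>2)"
    have opt: "lam * ?Lin (G (Suc k)) + gam / 2 * ?Qo (G (Suc k)) + rho k / 2 * ?R (G (Suc k))
        \<le> lam * ?Lin (G k) + gam / 2 * ?Qo (G k) + rho k / 2 * ?R (G k)"
      using step3_min[OF Fk, of k] unfolding graph_obj_def .
    have dl_eq: "dl (Suc k) i = real (card {j. j < n \<and> pres i j})
        / sqrt (fro2 ((A (Suc k) - transpose_mat (W (Suc k) i) * X i) * P i) + lam * trLap (A (Suc k)) (lat_slice n (G k) i))"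
      if "i < m" for i
      using step2[OF that, of k] unfolding fview_def .
    have card_le: "real (card {j. j < n \<and> pres i j}) \<le> real n" for i
    proof -
      have "card {j. j < n \<and> pres i j} \<le> card {..<n}" by (intro card_mono) auto
      then show ?thesis by simp
    qed
    have dl_nn: "0 \<le> dl (Suc k) i" if "i < m" for i
      unfolding dl_eq[OF that] using trLap_nonneg[OF Fk that Acar] fro2_nonneg params(1)
      by (intro divide_nonneg_nonneg) auto
    have L1: "0 \<le> lam * ?Lin (G (Suc k))"
      using params(1) dl_nn trLap_nonneg[OF F1 _ Acar]
      by (intro mult_nonneg_nonneg sum_nonneg) auto
    have L0: "lam * ?Lin (G k) \<le> real m * (real n * sqrt (lam * (2 * real n * real d)))"
    proof -
      have "lam * ?Lin (G k) = (\<Sum>i<m. lam * (dl (Suc k) i * trLap (A (Suc k)) (lat_slice n (G k) i)))"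
        by (simp add: sum_distrib_left)
      also have "\<dots> \<le> (\<Sum>i<m. real n * sqrt (lam * (2 * real n * real d)))"
      proof (intro sum_mono)
        fix i assume i: "i \<in> {..<m}"
        show "lam * (dl (Suc k) i * trLap (A (Suc k)) (lat_slice n (G k) i)) \<le> real n * sqrt (lam * (2 * real n * real d))"
          unfolding dl_eq[of i, OF i[simplified]]
          by (rule lin_term_le)
            (use params(1) fro2_nonneg trLap_nonneg[OF Fk _ Acar] trLap_le[OF Fk _ Acar AA] card_le i in auto)
      qed
      also have "\<dots> = real m * (real n * sqrt (lam * (2 * real n * real d)))" by simp
      finally show ?thesis .
    qed
    have Q1: "0 \<le> ?Qo (G (Suc k))" by (intro sum_nonneg) auto
    have Q0: "?Qo (G k) \<le> K2"
      unfolding K2_def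
    proof (intro sum_mono)
      fix a b c assume abc: "a \<in> {..<n}" "b \<in> {..<m}" "c \<in> {..<n}"
      have g: "0 \<le> G k a b c" "G k a b c \<le> 1" using feas_le1[OF Fk, of a b c] abc by auto
      have "\<bar>G k a b c - M a b c\<bar> \<le> 1 + \<bar>M a b c\<bar>" using g by linarith
      then have "(G k a b c - M a b c)\<^sup>2 \<le> (1 + \<bar>M a b c\<bar>)\<^sup>2"
        by (metis abs_ge_zero power2_abs power_mono)
      then show "(if (a, b, c) \<in> Om then (G k a b c - M a b c)\<^sup>2 else 0) \<le> (1 + \<bar>M a b c\<bar>)\<^sup>2"
        by auto
    qed
    have Rr: "?R GG = ss n m (\<lambda>a b c. GG a b c - Tt k a b c)" for GG
      unfolding ss_def Tt_def by (simp add: algebra_simps)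
    have "rho k / 2 * ?R (G (Suc k)) \<le> Kc + rho k / 2 * ?R (G k)"
    proof -
      have a1: "gam / 2 * ?Qo (G k) \<le> gam / 2 * K2" by (rule mult_left_mono[OF Q0]) (use params(3) in simp)
      have a2: "0 \<le> gam / 2 * ?Qo (G (Suc k))" using Q1 params(3) by simp
      show ?thesis using opt L1 L0 a1 a2 unfolding Kc_def by linarith
    qed
    then have "?R (G (Suc k)) \<le> (2 / rho k) * (Kc + rho k / 2 * ?R (G k))"
      using rho_pos[of k] by (simp add: field_simps)
    also have "\<dots> = ?R (G k) + 2 * Kc / rho k" using rho_pos[of k] by (simp add: field_simps)
    finally show ?thesis unfolding Rr .
  qed
  have Kc_lim: "(\<lambda>j. 2 * Kc / rho (Suc (Suc j))) \<longlonglongrightarrow> 0"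
  proof -
    have fe: "(\<lambda>k. 2 * Kc / rho k) = (\<lambda>k. (2 * Kc / mu) * (mu / rho k))"
      using params(2) by (auto simp: field_simps)
    have "(\<lambda>k. 2 * Kc / rho k) \<longlonglongrightarrow> 0"
      unfolding fe by (rule tendsto_mult_right_zero[OF tau_lim])
    from LIMSEQ_Suc[OF LIMSEQ_Suc[OF this]] show ?thesis by simp
  qed
  have g_lim: "(\<lambda>j. ss n m (\<lambda>a b c. G (Suc (Suc (Suc j))) a b c - Tt (Suc (Suc j)) a b c)) \<longlonglongrightarrow> 0"
  proof (rule squeeze0[OF ss_nonneg])
    show "ss n m (\<lambda>a b c. G (Suc (Suc (Suc j))) a b c - Tt (Suc (Suc j)) a b c)
        \<le> ss n m (\<lambda>a b c. G (Suc (Suc j)) a b c - Tt (Suc (Suc j)) a b c) + 2 * Kc / rho (Suc (Suc j))" for j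
      by (rule gstep) simp
    show "(\<lambda>j. ss n m (\<lambda>a b c. G (Suc (Suc j)) a b c - Tt (Suc (Suc j)) a b c) + 2 * Kc / rho (Suc (Suc j))) \<longlonglongrightarrow> 0"
      using tendsto_add_zero[OF h_lim Kc_lim] .
  qed
  have f2_lim: "(\<lambda>k. ss n m (\<lambda>a b c. G (Suc k) a b c - G k a b c)) \<longlonglongrightarrow> 0"
  proof -
    have le: "ss n m (\<lambda>a b c. G (Suc (Suc (Suc j))) a b c - G (Suc (Suc j)) a b c)
        \<le> 2 * 1\<^sup>2 * ss n m (\<lambda>a b c. G (Suc (Suc (Suc j))) a b c - Tt (Suc (Suc j)) a b c)
          + 2 * (-1)\<^sup>2 * ss n m (\<lambda>a b c. G (Suc (Suc j)) a b c - Tt (Suc (Suc j)) a b c)" for j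
      by (rule ss_add2) simp
    have "(\<lambda>j. 2 * 1\<^sup>2 * ss n m (\<lambda>a b c. G (Suc (Suc (Suc j))) a b c - Tt (Suc (Suc j)) a b c)
          + 2 * (-1::real)\<^sup>2 * ss n m (\<lambda>a b c. G (Suc (Suc j)) a b c - Tt (Suc (Suc j)) a b c)) \<longlonglongrightarrow> 0"
      by (intro tendsto_add_zero tendsto_mult_right_zero g_lim h_lim)
    then have "(\<lambda>j. ss n m (\<lambda>a b c. G (Suc (Suc (Suc j))) a b c - G (Suc (Suc j)) a b c)) \<longlonglongrightarrow> 0"
      by (rule squeeze0[OF ss_nonneg le])
    note lim2 = this
    show ?thesis by (rule LIMSEQ_imp_Suc, rule LIMSEQ_imp_Suc, rule lim2)
  qed
  have f3_lim: "(\<lambda>k. ss n m (\<lambda>a b c. Y (Suc k) a b c - Y k a b c)) \<longlonglongrightarrow> 0"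
  proof -
    have neg: "ss n m (\<lambda>a b c. Y k a b c - G k a b c) = ss n m (\<lambda>a b c. G k a b c - Y k a b c)" for k
      unfolding ss_def by (simp add: power2_commute)
    have le: "ss n m (\<lambda>a b c. Y (Suc k) a b c - Y k a b c)
        \<le> 3 * ss n m (\<lambda>a b c. G (Suc k) a b c - Y (Suc k) a b c)
          + 3 * ss n m (\<lambda>a b c. G (Suc k) a b c - G k a b c)
          + 3 * ss n m (\<lambda>a b c. G k a b c - Y k a b c)" for k
      using ss_add3[of n m "\<lambda>a b c. Y (Suc k) a b c - Y k a b c"
          "\<lambda>a b c. Y (Suc k) a b c - G (Suc k) a b c" "\<lambda>a b c. G (Suc k) a b c - G k a b c"
          "\<lambda>a b c. G k a b c - Y k a b c"]
      by (simp add: neg)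
    have "(\<lambda>k. 3 * ss n m (\<lambda>a b c. G (Suc k) a b c - Y (Suc k) a b c)
          + 3 * ss n m (\<lambda>a b c. G (Suc k) a b c - G k a b c)
          + 3 * ss n m (\<lambda>a b c. G k a b c - Y k a b c)) \<longlonglongrightarrow> 0"
      by (intro tendsto_add_zero tendsto_mult_right_zero f1_lim f2_lim LIMSEQ_Suc[OF f1_lim])
    then show ?thesis by (rule squeeze0[OF ss_nonneg le])
  qed
  show ?thesis using ss_lim[OF f1_lim] ss_lim[OF f2_lim] ss_lim[OF f3_lim] by simp
qed


end
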